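(* For any $\mathrm{LP}^{\mathrm{MLN}}$ program $\Pi$, the map \[ \phi(I)=I\cup\{\mathtt{unsat}(i,w_i,\mathbf c) : w_i:\mathit{Head}_i(\mathbf c)\leftarrow\mathit{Body}_i(\mathbf c)\in Gr(\Pi),\ I\not\models \mathit{Body}_i(\mathbf c)\rightarrow \mathit{Head}_i(\mathbf c)\} \] is a one-to-one correspondence between $\mathrm{SM}[\Pi]$ and the set of stable models of $\mathsf{lpmln2asp^{pnt}}(\Pi)$. Furthermore, for every $I\in\mathrm{SM}[\Pi]$, \[ W^{\rm pnt}_\Pi(I)=\exp\Big(-\sum_{\mathtt{unsat}(i,w_i,\mathbf c)\in\phi(I)} w_i\Big). \] Also, $\phi$ restricts to a one-to-one correspondence between the most probable stable models of $\Pi$ and the optimal stable models of $\mathsf{lpmln2asp^{pnt}}(\Pi)$.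
   Context: An $\mathrm{LP}^{\mathrm{MLN}}$ program is a finite set of weighted rules $w_i:\mathit{Head}_i(\mathbf x)\leftarrow \mathit{Body}_i(\mathbf x)$, indexed by $i$, where $\mathbf x$ is the list of global variables, $\mathit{Head}_i$ is a possibly empty disjunction of atoms $l_1;\dots;l_n$, $\mathit{Body}_i$ a conjunction of literals, and $w_i$ a real number or the symbol $\alpha$ (infinite weight). The Herbrand universe is finite; $Gr(\Pi)$ replaces global variables by all tuples $\mathbf c$. For ground $\Pi$ and interpretation $I$: $\overline{\Pi}$ drops weights, $\Pi_I$ is the set of rules satisfied by $I$, $\mathrm{SM}[\Pi]=\{I: I\text{ stable model of }\overline{\Pi_I}\}$; $W^{\rm pnt}_\Pi(I)=\exp(-\sum_{w:R\in\Pi,\ I\not\models R}w)$ if $I\in\mathrm{SM}[\Pi]$ and $0$ otherwise; $W_\Pi(I)=\exp(\sum_{w:R\in\Pi_I}w)$ if $I\in\mathrm{SM}[\Pi]$, else $0$; $P_\Pi(I)=\lim_{\alpha\to\infty}W_\Pi(I)/\sum_{J\in\mathrm{SM}[\Pi]}W_\Pi(J)$; most probable stable models maximize $P_\Pi$. Weak constraints: $:\sim F\ [\mathit{Weight}@\mathit{Level}]$ with $F$ a conjunction of literals, real weight, nonnegative integer level (optionally with a tuple of terms distinguishing instances). For $\Pi_1\cup\Pi_2$ ($\Pi_1$ without weak constraints, $\Pi_2$ ground weak constraints), stable models are those of $\Pi_1$; the penalty of $I$ at level $l$ is $\sum_{:\sim F[w@l]\in\Pi_2,\ I\models F}w$;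 $I$ is dominated by $I'$ if at some level $l$ the penalty of $I'$ is strictly smaller and they agree at all levels $k>l$; optimal stable models are those not dominated. $\mathsf{lpmln2asp^{pnt}}(\Pi)$ replaces each rule $w_i:\mathit{Head}_i(\mathbf x)\leftarrow\mathit{Body}_i(\mathbf x)$ by $\mathtt{unsat}(i,w_i,\mathbf x)\leftarrow \mathit{Body}_i(\mathbf x),\ \mathtt{not}\ \mathit{Head}_i(\mathbf x)$; $\mathit{Head}_i(\mathbf x)\leftarrow \mathit{Body}_i(\mathbf x),\ \mathtt{not}\ \mathtt{unsat}(i,w_i,\mathbf x)$; $:\sim \mathtt{unsat}(i,w_i,\mathbf x).\ [w'_i@l, i,\mathbf x]$, where $w'_i=1,\ l=1$ if $w_i=\alpha$ and $w'_i=w_i,\ l=0$ otherwise; $\mathtt{not}\ \mathit{Head}_i$ for $\mathit{Head}_i=l_1;\dots;l_n$ stands for $\mathtt{not}\ l_1,\dots,\mathtt{not}\ l_n$; $\mathtt{unsat}$ is a fresh predicate. In the weight formula hard weights are kept as the symbol $\alpha$. *)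

theory Defs
  imports Complex_Main
begin

text \<open>A ground rule  l1;...;ln <- a1,...,am, not b1,...,not bk  (head may be empty).\<close>
datatype 'b rule = Rule (head: "'b set") (pos: "'b set") (neg: "'b set")

definition body_sat :: "'b set \<Rightarrow> 'b rule \<Rightarrow> bool" where
  "body_sat I r \<longleftrightarrow> pos r \<subseteq> I \<and> neg r \<inter> I = {}"

definition sat_rule :: "'b set \<Rightarrow> 'b rule \<Rightarrow> bool" where
  "sat_rule I r \<longleftrightarrow> (body_sat I r \<longrightarrow> head r \<inter> I \<noteq> {})"

definition is_model :: "'b set \<Rightarrow> 'b rule set \<Rightarrow> bool" where
  "is_model I P \<longleftrightarrow> (\<forall>r\<in>P. sat_rule I r)"

definition reduct :: "'b rule set \<Rightarrow> 'b set \<Rightarrow> 'b rule set" where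
  "reduct P I = {Rule (head r) (pos r) {} | r. r \<in> P \<and> neg r \<inter> I = {}}"

definition stable :: "'b rule set \<Rightarrow> 'b set \<Rightarrow> bool" where
  "stable P I \<longleftrightarrow> is_model I (reduct P I) \<and> (\<forall>J. J \<subset> I \<longrightarrow> \<not> is_model J (reduct P I))"

text \<open>Ground weak constraint  :~ F [Weight@Level, id]  with F a conjunction of literals.\<close>
datatype ('b, 'd) wc = WC (wpos: "'b set") (wneg: "'b set") (wweight: real) (wlevel: nat) (wid: 'd)

definition penalty :: "('b, 'd) wc set \<Rightarrow> 'b set \<Rightarrow> nat \<Rightarrow> real" where
  "penalty W I l = (\<Sum>c\<in>{c\<in>W. wlevel c = l \<and> wpos c \<subseteq> I \<and> wneg c \<inter> I = {}}. wweight c)"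

definition dominated :: "('b, 'd) wc set \<Rightarrow> 'b set \<Rightarrow> 'b set \<Rightarrow> bool" where
  "dominated W I I' \<longleftrightarrow> (\<exists>l. penalty W I' l < penalty W I l \<and> (\<forall>k>l. penalty W I' k = penalty W I k))"

definition optimal :: "'b rule set \<Rightarrow> ('b, 'd) wc set \<Rightarrow> 'b set \<Rightarrow> bool" where
  "optimal P W I \<longleftrightarrow> stable P I \<and> \<not> (\<exists>I'. stable P I' \<and> dominated W I I')"

text \<open>Weights: a real number or the symbol alpha (hard).\<close>
datatype weight = Soft real | Hard

fun wval :: "weight \<Rightarrow> real \<Rightarrow> real" where
  "wval (Soft r) a = r"
| "wval Hard a = a"

text \<open>An LP^MLN program: rules indexed by idx; rule i has weight wt i; tup i is the
  (finite) set of tuples of Herbrand constants for its global variables; rl i c is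
  the ground rule Head_i(c) <- Body_i(c).  Gr(Pi) is the family indexed by (i,c).\<close>
record ('a, 'i, 'c) lpmln =
  idx :: "'i set"
  tup :: "'i \<Rightarrow> 'c set"
  wt  :: "'i \<Rightarrow> weight"
  rl  :: "'i \<Rightarrow> 'c \<Rightarrow> 'a rule"

definition gr_idx :: "('a, 'i, 'c) lpmln \<Rightarrow> ('i \<times> 'c) set" where
  "gr_idx \<Pi> = Sigma (idx \<Pi>) (tup \<Pi>)"

definition wf_lpmln :: "('a, 'i, 'c) lpmln \<Rightarrow> bool" where
  "wf_lpmln \<Pi> \<longleftrightarrow> finite (idx \<Pi>) \<and> (\<forall>i\<in>idx \<Pi>. finite (tup \<Pi> i)) \<and>
     (\<forall>(i,c)\<in>gr_idx \<Pi>. finite (head (rl \<Pi> i c)) \<and> finite (pos (rl \<Pi> i c)) \<and> finite (neg (rl \<Pi> i c)))"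

definition SM :: "('a, 'i, 'c) lpmln \<Rightarrow> 'a set set" where
  "SM \<Pi> = {I. stable {rl \<Pi> i c | i c. (i, c) \<in> gr_idx \<Pi> \<and> sat_rule I (rl \<Pi> i c)} I}"

definition W_pnt :: "('a, 'i, 'c) lpmln \<Rightarrow> real \<Rightarrow> 'a set \<Rightarrow> real" where
  "W_pnt \<Pi> a I = (if I \<in> SM \<Pi> then
     exp (- (\<Sum>(i,c)\<in>{(i,c)\<in>gr_idx \<Pi>. \<not> sat_rule I (rl \<Pi> i c)}. wval (wt \<Pi> i) a)) else 0)"

definition W :: "('a, 'i, 'c) lpmln \<Rightarrow> real \<Rightarrow> 'a set \<Rightarrow> real" where
  "W \<Pi> a I = (if I \<in> SM \<Pi> then
     exp (\<Sum>(i,c)\<in>{(i,c)\<in>gr_idx \<Pi>. sat_rule I (rl \<Pi> i c)}. wval (wt \<Pi> i) a) else 0)"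

definition Prob :: "('a, 'i, 'c) lpmln \<Rightarrow> 'a set \<Rightarrow> real" where
  "Prob \<Pi> I = Lim at_top (\<lambda>a. W \<Pi> a I / (\<Sum>J\<in>SM \<Pi>. W \<Pi> a J))"

definition most_probable :: "('a, 'i, 'c) lpmln \<Rightarrow> 'a set set" where
  "most_probable \<Pi> = {I \<in> SM \<Pi>. \<forall>J\<in>SM \<Pi>. Prob \<Pi> J \<le> Prob \<Pi> I}"

datatype ('a, 'i, 'c) tatom = Atom 'a | Unsat 'i weight 'c

definition tr_rules :: "('a, 'i, 'c) lpmln \<Rightarrow> ('a, 'i, 'c) tatom rule set" where
  "tr_rules \<Pi> = (\<Union>(i,c)\<in>gr_idx \<Pi>.
     (let r = rl \<Pi> i c; u = Unsat i (wt \<Pi> i) c in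
       { Rule {u} (Atom ` pos r) (Atom ` neg r \<union> Atom ` head r),
         Rule (Atom ` head r) (Atom ` pos r) (Atom ` neg r \<union> {u}) }))"

definition tr_wcs :: "('a, 'i, 'c) lpmln \<Rightarrow> (('a, 'i, 'c) tatom, 'i \<times> 'c) wc set" where
  "tr_wcs \<Pi> = (\<lambda>(i,c). WC {Unsat i (wt \<Pi> i) c} {}
       (case wt \<Pi> i of Hard \<Rightarrow> 1 | Soft r \<Rightarrow> r)
       (case wt \<Pi> i of Hard \<Rightarrow> 1 | Soft r \<Rightarrow> 0) (i, c)) ` gr_idx \<Pi>"

definition phi :: "('a, 'i, 'c) lpmln \<Rightarrow> 'a set \<Rightarrow> ('a, 'i, 'c) tatom set" where
  "phi \<Pi> I = Atom ` I \<union> {Unsat i (wt \<Pi> i) c | i c. (i, c) \<in> gr_idx \<Pi> \<and> \<not> sat_rule I (rl \<Pi> i c)}"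

end

theory Submission
  imports Defs
begin

definition PI :: "('a, 'i, 'c) lpmln \<Rightarrow> 'a set \<Rightarrow> 'a rule set" where
  "PI \<Pi> I = {rl \<Pi> i c | i c. (i, c) \<in> gr_idx \<Pi> \<and> sat_rule I (rl \<Pi> i c)}"

lemma SM_PI: "I \<in> SM \<Pi> \<longleftrightarrow> stable (PI \<Pi> I) I"
  by (simp add: SM_def PI_def)

lemma sat_Rule_empty[simp]: "sat_rule K (Rule h p {}) \<longleftrightarrow> (p \<subseteq> K \<longrightarrow> h \<inter> K \<noteq> {})"
  by (auto simp: sat_rule_def body_sat_def)

lemma model_PI: "is_model K (reduct (PI \<Pi> I) I) \<longleftrightarrow>
  (\<forall>(i,c)\<in>gr_idx \<Pi>. sat_rule I (rl \<Pi> i c) \<longrightarrow> neg (rl \<Pi> i c) \<inter> I = {} \<longrightarrow>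
     pos (rl \<Pi> i c) \<subseteq> K \<longrightarrow> head (rl \<Pi> i c) \<inter> K \<noteq> {})"
  unfolding is_model_def reduct_def PI_def
  by fastforce

lemma reduct_I: "r \<in> P \<Longrightarrow> neg r \<inter> J = {} \<Longrightarrow> Rule (head r) (pos r) {} \<in> reduct P J"
  unfolding reduct_def by auto

lemma tr_mem: "r \<in> tr_rules \<Pi> \<longleftrightarrow> (\<exists>(i,c)\<in>gr_idx \<Pi>.
     r = Rule {Unsat i (wt \<Pi> i) c} (Atom ` pos (rl \<Pi> i c)) (Atom ` neg (rl \<Pi> i c) \<union> Atom ` head (rl \<Pi> i c)) \<or>
     r = Rule (Atom ` head (rl \<Pi> i c)) (Atom ` pos (rl \<Pi> i c)) (Atom ` neg (rl \<Pi> i c) \<union> {Unsat i (wt \<Pi> i) c}))"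
  unfolding tr_rules_def Let_def by blast

lemma model_tr: "is_model K (reduct (tr_rules \<Pi>) J) \<longleftrightarrow>
  (\<forall>(i,c)\<in>gr_idx \<Pi>.
    ((Atom ` neg (rl \<Pi> i c) \<union> Atom ` head (rl \<Pi> i c)) \<inter> J = {} \<longrightarrow>
       Atom ` pos (rl \<Pi> i c) \<subseteq> K \<longrightarrow> Unsat i (wt \<Pi> i) c \<in> K) \<and>
    ((Atom ` neg (rl \<Pi> i c) \<union> {Unsat i (wt \<Pi> i) c}) \<inter> J = {} \<longrightarrow>
       Atom ` pos (rl \<Pi> i c) \<subseteq> K \<longrightarrow> Atom ` head (rl \<Pi> i c) \<inter> K \<noteq> {}))"
  (is "?L \<longleftrightarrow> ?R")
proof
  assume L: ?L
  show ?R
  proof (clarify, intro conjI impI)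
    fix i c assume g: "(i,c) \<in> gr_idx \<Pi>"
    let ?r = "rl \<Pi> i c" let ?u = "Unsat i (wt \<Pi> i) c"
    {
      assume a: "(Atom ` neg ?r \<union> Atom ` head ?r) \<inter> J = {}" "Atom ` pos ?r \<subseteq> K"
      have "Rule {?u} (Atom ` pos ?r) (Atom ` neg ?r \<union> Atom ` head ?r) \<in> tr_rules \<Pi>"
        using g unfolding tr_mem by blast
      then have "Rule {?u} (Atom ` pos ?r) {} \<in> reduct (tr_rules \<Pi>) J"
        using reduct_I a(1) by fastforce
      then have "sat_rule K (Rule {?u} (Atom ` pos ?r) {})" using L unfolding is_model_def by blast
      then show "?u \<in> K" using a(2) by simp
    }
    {
      assume a: "(Atom ` neg ?r \<union> {?u}) \<inter> J = {}" "Atom ` pos ?r \<subseteq> K"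
      have "Rule (Atom ` head ?r) (Atom ` pos ?r) (Atom ` neg ?r \<union> {?u}) \<in> tr_rules \<Pi>"
        using g unfolding tr_mem by blast
      then have "Rule (Atom ` head ?r) (Atom ` pos ?r) {} \<in> reduct (tr_rules \<Pi>) J"
        using reduct_I a(1) by fastforce
      then have "sat_rule K (Rule (Atom ` head ?r) (Atom ` pos ?r) {})" using L unfolding is_model_def by blast
      then show "Atom ` head ?r \<inter> K \<noteq> {}" using a(2) by simp
    }
  qed
next
  assume R: ?R
  show ?L unfolding is_model_def
  proof
    fix R' assume "R' \<in> reduct (tr_rules \<Pi>) J"
    then obtain r where R': "R' = Rule (head r) (pos r) {}" and r: "r \<in> tr_rules \<Pi>" "neg r \<inter> J = {}"
      unfolding reduct_def by blast
    from r(1) obtain i c where g: "(i,c) \<in> gr_idx \<Pi>" and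
      "r = Rule {Unsat i (wt \<Pi> i) c} (Atom ` pos (rl \<Pi> i c)) (Atom ` neg (rl \<Pi> i c) \<union> Atom ` head (rl \<Pi> i c)) \<or>
     r = Rule (Atom ` head (rl \<Pi> i c)) (Atom ` pos (rl \<Pi> i c)) (Atom ` neg (rl \<Pi> i c) \<union> {Unsat i (wt \<Pi> i) c})"
      unfolding tr_mem by blast
    then show "sat_rule K R'" using R g r(2) unfolding R' by auto
  qed
qed

lemma model_trD1: "is_model K (reduct (tr_rules \<Pi>) J) \<Longrightarrow> (i,c) \<in> gr_idx \<Pi> \<Longrightarrow>
  (Atom ` neg (rl \<Pi> i c) \<union> Atom ` head (rl \<Pi> i c)) \<inter> J = {} \<Longrightarrow>
  Atom ` pos (rl \<Pi> i c) \<subseteq> K \<Longrightarrow> Unsat i (wt \<Pi> i) c \<in> K"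
  unfolding model_tr by fast

lemma model_trD2: "is_model K (reduct (tr_rules \<Pi>) J) \<Longrightarrow> (i,c) \<in> gr_idx \<Pi> \<Longrightarrow>
  (Atom ` neg (rl \<Pi> i c) \<union> {Unsat i (wt \<Pi> i) c}) \<inter> J = {} \<Longrightarrow>
  Atom ` pos (rl \<Pi> i c) \<subseteq> K \<Longrightarrow> Atom ` head (rl \<Pi> i c) \<inter> K \<noteq> {}"
  unfolding model_tr by fast

lemma model_PID: "is_model K (reduct (PI \<Pi> I) I) \<Longrightarrow> (i,c) \<in> gr_idx \<Pi> \<Longrightarrow>
  sat_rule I (rl \<Pi> i c) \<Longrightarrow> neg (rl \<Pi> i c) \<inter> I = {} \<Longrightarrow>
     pos (rl \<Pi> i c) \<subseteq> K \<Longrightarrow> head (rl \<Pi> i c) \<inter> K \<noteq> {}"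
  unfolding model_PI by fast

lemma Atom_phi: "Atom a \<in> phi \<Pi> I \<longleftrightarrow> a \<in> I"
  by (auto simp: phi_def)

lemma Unsat_phi: "(i,c) \<in> gr_idx \<Pi> \<Longrightarrow> Unsat i (wt \<Pi> i) c \<in> phi \<Pi> I \<longleftrightarrow> \<not> sat_rule I (rl \<Pi> i c)"
  by (auto simp: phi_def)

lemma Unsat_phiE: "Unsat i w c \<in> phi \<Pi> I \<Longrightarrow> w = wt \<Pi> i \<and> (i,c) \<in> gr_idx \<Pi> \<and> \<not> sat_rule I (rl \<Pi> i c)"
  by (auto simp: phi_def)


lemma model_self: "is_model I (reduct (PI \<Pi> I) I)"
  unfolding model_PI by (auto simp: sat_rule_def body_sat_def)

lemma phi_stable:
  assumes "I \<in> SM \<Pi>"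
  shows "stable (tr_rules \<Pi>) (phi \<Pi> I)"
proof -
  let ?J = "phi \<Pi> I"
  from assms have minI: "\<And>I'. I' \<subset> I \<Longrightarrow> \<not> is_model I' (reduct (PI \<Pi> I) I)"
    unfolding SM_PI stable_def by blast
  have m: "is_model ?J (reduct (tr_rules \<Pi>) ?J)"
    unfolding model_tr
  proof (clarify, intro conjI impI)
    fix i c assume g: "(i,c) \<in> gr_idx \<Pi>"
    let ?r = "rl \<Pi> i c"
    show "Unsat i (wt \<Pi> i) c \<in> ?J"
      if "(Atom ` neg ?r \<union> Atom ` head ?r) \<inter> ?J = {}" "Atom ` pos ?r \<subseteq> ?J"
      using that g by (auto simp: Unsat_phi Atom_phi sat_rule_def body_sat_def)
    show "Atom ` head ?r \<inter> ?J \<noteq> {}"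
      if "(Atom ` neg ?r \<union> {Unsat i (wt \<Pi> i) c}) \<inter> ?J = {}" "Atom ` pos ?r \<subseteq> ?J"
      using that g by (auto simp: Unsat_phi Atom_phi sat_rule_def body_sat_def)
  qed
  have "\<not> is_model K (reduct (tr_rules \<Pi>) ?J)" if KJ: "K \<subset> ?J" for K
  proof
    assume mK: "is_model K (reduct (tr_rules \<Pi>) ?J)"
    define I' where "I' = {a. Atom a \<in> K}"
    have sub: "I' \<subseteq> I" using KJ by (auto simp: I'_def Atom_phi)
    have "is_model I' (reduct (PI \<Pi> I) I)"
      unfolding model_PI
    proof (clarify)
      fix i c assume g: "(i,c) \<in> gr_idx \<Pi>" and s: "sat_rule I (rl \<Pi> i c)"
        and n: "neg (rl \<Pi> i c) \<inter> I = {}" and p: "pos (rl \<Pi> i c) \<subseteq> I'"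
        and h: "head (rl \<Pi> i c) \<inter> I' = {}"
      have "(Atom ` neg (rl \<Pi> i c) \<union> {Unsat i (wt \<Pi> i) c}) \<inter> ?J = {}"
        using n s g by (auto simp: Unsat_phi Atom_phi)
      moreover have "Atom ` pos (rl \<Pi> i c) \<subseteq> K" using p by (auto simp: I'_def)
      ultimately have "Atom ` head (rl \<Pi> i c) \<inter> K \<noteq> {}"
        by (rule model_trD2[OF mK g])
      then show False using h by (auto simp: I'_def)
    qed
    then have "I' = I" using minI sub by blast
    have "?J \<subseteq> K"
    proof
      fix x assume x: "x \<in> ?J"
      show "x \<in> K"
      proof (cases x)
        case (Atom a)
        then show ?thesis using x \<open>I' = I\<close> by (auto simp: I'_def Atom_phi)
      next
        case (Unsat i w c)
        with x have e: "w = wt \<Pi> i" "(i,c) \<in> gr_idx \<Pi>" "\<not> sat_rule I (rl \<Pi> i c)"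
          using Unsat_phiE by metis+
        have "(Atom ` neg (rl \<Pi> i c) \<union> Atom ` head (rl \<Pi> i c)) \<inter> ?J = {}"
          using e by (auto simp: Atom_phi sat_rule_def body_sat_def)
        moreover have "Atom ` pos (rl \<Pi> i c) \<subseteq> K"
          using e \<open>I' = I\<close> by (auto simp: I'_def sat_rule_def body_sat_def)
        ultimately show ?thesis unfolding Unsat e(1) by (rule model_trD1[OF mK e(2)])
      qed
    qed
    then show False using KJ by blast
  qed
  then show ?thesis using m unfolding stable_def by blast
qed

lemma stable_phi:
  assumes st: "stable (tr_rules \<Pi>) J"
  shows "J = phi \<Pi> {a. Atom a \<in> J}" and "{a. Atom a \<in> J} \<in> SM \<Pi>"
proof -
  define I where "I = {a. Atom a \<in> J}"
  from st have mJ: "is_model J (reduct (tr_rules \<Pi>) J)"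
    and minJ: "\<And>K. K \<subset> J \<Longrightarrow> \<not> is_model K (reduct (tr_rules \<Pi>) J)"
    unfolding stable_def by blast+
  have eq: "J = phi \<Pi> I"
  proof
    show "phi \<Pi> I \<subseteq> J"
    proof
      fix x assume x: "x \<in> phi \<Pi> I"
      show "x \<in> J"
      proof (cases x)
        case (Atom a)
        then show ?thesis using x by (auto simp: I_def Atom_phi)
      next
        case (Unsat i w c)
        with x have e: "w = wt \<Pi> i" "(i,c) \<in> gr_idx \<Pi>" "\<not> sat_rule I (rl \<Pi> i c)"
          using Unsat_phiE by metis+
        have "(Atom ` neg (rl \<Pi> i c) \<union> Atom ` head (rl \<Pi> i c)) \<inter> J = {}"
          using e by (auto simp: I_def sat_rule_def body_sat_def)
        moreover have "Atom ` pos (rl \<Pi> i c) \<subseteq> J"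
          using e by (auto simp: I_def sat_rule_def body_sat_def)
        ultimately show ?thesis unfolding Unsat e(1) by (rule model_trD1[OF mJ e(2)])
      qed
    qed
  next
    show "J \<subseteq> phi \<Pi> I"
    proof
      fix x assume x: "x \<in> J"
      show "x \<in> phi \<Pi> I"
      proof (cases x)
        case (Atom a)
        then show ?thesis using x by (auto simp: I_def Atom_phi)
      next
        case (Unsat i w c)
        show ?thesis
        proof (rule ccontr)
          assume nx: "x \<notin> phi \<Pi> I"
          define K where "K = J - {x}"
          have "K \<subset> J" using x by (auto simp: K_def)
          moreover have "is_model K (reduct (tr_rules \<Pi>) J)"
            unfolding model_tr
          proof (clarify, intro conjI impI)
            fix i' c' assume g: "(i',c') \<in> gr_idx \<Pi>"
            let ?r = "rl \<Pi> i' c'"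
            show "Unsat i' (wt \<Pi> i') c' \<in> K"
              if a: "(Atom ` neg ?r \<union> Atom ` head ?r) \<inter> J = {}" "Atom ` pos ?r \<subseteq> K"
            proof -
              have "Atom ` pos ?r \<subseteq> J" using a(2) by (auto simp: K_def)
              then have u: "Unsat i' (wt \<Pi> i') c' \<in> J" by (rule model_trD1[OF mJ g a(1)])
              have "\<not> sat_rule I ?r" using a \<open>Atom ` pos ?r \<subseteq> J\<close>
                by (auto simp: I_def sat_rule_def body_sat_def)
              then have "Unsat i' (wt \<Pi> i') c' \<in> phi \<Pi> I" using g Unsat_phi by metis
              then have "Unsat i' (wt \<Pi> i') c' \<noteq> x" using nx by blast
              then show ?thesis using u by (auto simp: K_def)
            qed
            show "Atom ` head ?r \<inter> K \<noteq> {}"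
              if a: "(Atom ` neg ?r \<union> {Unsat i' (wt \<Pi> i') c'}) \<inter> J = {}" "Atom ` pos ?r \<subseteq> K"
            proof -
              have "Atom ` pos ?r \<subseteq> J" using a(2) by (auto simp: K_def)
              then have "Atom ` head ?r \<inter> J \<noteq> {}" by (rule model_trD2[OF mJ g a(1)])
              then show ?thesis using Unsat by (auto simp: K_def)
            qed
          qed
          ultimately show False using minJ by blast
        qed
      qed
    qed
  qed
  then show "J = phi \<Pi> {a. Atom a \<in> J}" by (simp add: I_def)
  have "\<not> is_model I' (reduct (PI \<Pi> I) I)" if I'I: "I' \<subset> I" for I'
  proof
    assume mI': "is_model I' (reduct (PI \<Pi> I) I)"
    define K where "K = Atom ` I' \<union> {x\<in>J. \<forall>a. x \<noteq> Atom a}"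
    have "K \<subset> J" using I'I by (auto simp: K_def I_def)
    moreover have "is_model K (reduct (tr_rules \<Pi>) J)"
      unfolding model_tr
    proof (clarify, intro conjI impI)
      fix i c assume g: "(i,c) \<in> gr_idx \<Pi>"
      let ?r = "rl \<Pi> i c"
      show "Unsat i (wt \<Pi> i) c \<in> K"
        if a: "(Atom ` neg ?r \<union> Atom ` head ?r) \<inter> J = {}" "Atom ` pos ?r \<subseteq> K"
      proof -
        have "Atom ` pos ?r \<subseteq> J" using a(2) I'I by (auto simp: K_def I_def)
        then have u: "Unsat i (wt \<Pi> i) c \<in> J" by (rule model_trD1[OF mJ g a(1)])
        then show ?thesis by (auto simp: K_def)
      qed
      show "Atom ` head ?r \<inter> K \<noteq> {}"
        if a: "(Atom ` neg ?r \<union> {Unsat i (wt \<Pi> i) c}) \<inter> J = {}" "Atom ` pos ?r \<subseteq> K"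
      proof -
        have p: "pos ?r \<subseteq> I'" using a(2) by (auto simp: K_def)
        have "Unsat i (wt \<Pi> i) c \<notin> phi \<Pi> I" using a(1) eq by blast
        then have s: "sat_rule I ?r" using g Unsat_phi by metis
        have n: "neg ?r \<inter> I = {}" using a(1) by (auto simp: I_def)
        have "head ?r \<inter> I' \<noteq> {}" by (rule model_PID[OF mI' g s n p])
        then show ?thesis by (auto simp: K_def)
      qed
    qed
    ultimately show False using minJ by blast
  qed
  then have "stable (PI \<Pi> I) I" using model_self unfolding stable_def by blast
  then show "{a. Atom a \<in> J} \<in> SM \<Pi>" by (simp add: SM_PI I_def)
qed

lemma phi_inj: "inj_on (phi \<Pi>) A"
proof (rule inj_onI)
  fix I I' assume "phi \<Pi> I = phi \<Pi> I'"
  then have "\<forall>a. (a \<in> I) = (a \<in> I')" by (metis Atom_phi)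
  then show "I = I'" by blast
qed

lemma phi_bij: "bij_betw (phi \<Pi>) (SM \<Pi>) {J. stable (tr_rules \<Pi>) J}"
  unfolding bij_betw_def
proof
  show "inj_on (phi \<Pi>) (SM \<Pi>)" by (rule phi_inj)
  show "phi \<Pi> ` SM \<Pi> = {J. stable (tr_rules \<Pi>) J}"
  proof
    show "phi \<Pi> ` SM \<Pi> \<subseteq> {J. stable (tr_rules \<Pi>) J}" using phi_stable by blast
    show "{J. stable (tr_rules \<Pi>) J} \<subseteq> phi \<Pi> ` SM \<Pi>"
    proof
      fix J assume "J \<in> {J. stable (tr_rules \<Pi>) J}"
      then have "stable (tr_rules \<Pi>) J" by simp
      from stable_phi[OF this] show "J \<in> phi \<Pi> ` SM \<Pi>" by blast
    qed
  qed
qed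


fun sv :: "weight \<Rightarrow> real" where "sv (Soft r) = r" | "sv Hard = 0"
definition hv :: "weight \<Rightarrow> real" where "hv w = (if w = Hard then 1 else 0)"
lemma wval_split: "wval w a = a * hv w + sv w" by (cases w) (auto simp: hv_def)

definition NS :: "('a, 'i, 'c) lpmln \<Rightarrow> 'a set \<Rightarrow> ('i \<times> 'c) set" where
  "NS \<Pi> I = {(i,c) \<in> gr_idx \<Pi>. \<not> sat_rule I (rl \<Pi> i c)}"
definition HH :: "('a, 'i, 'c) lpmln \<Rightarrow> 'a set \<Rightarrow> real" where
  "HH \<Pi> I = (\<Sum>(i,c)\<in>NS \<Pi> I. hv (wt \<Pi> i))"
definition SS :: "('a, 'i, 'c) lpmln \<Rightarrow> 'a set \<Rightarrow> real" where
  "SS \<Pi> I = (\<Sum>(i,c)\<in>NS \<Pi> I. sv (wt \<Pi> i))"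

lemma fin_gr: "wf_lpmln \<Pi> \<Longrightarrow> finite (gr_idx \<Pi>)"
  unfolding wf_lpmln_def gr_idx_def by auto

lemma fin_NS: "wf_lpmln \<Pi> \<Longrightarrow> finite (NS \<Pi> I)"
  using fin_gr unfolding NS_def by (metis (no_types, lifting) finite_subset mem_Collect_eq case_prodE subsetI)

lemma part2:
  assumes "I \<in> SM \<Pi>"
  shows "W_pnt \<Pi> a I = exp (- (\<Sum>(i, w, c)\<in>{(i, w, c). Unsat i w c \<in> phi \<Pi> I}. wval w a))"
proof -
  have e: "{(i, w, c). Unsat i w c \<in> phi \<Pi> I} = (\<lambda>(i,c). (i, wt \<Pi> i, c)) ` NS \<Pi> I"
  proof
    show "{(i, w, c). Unsat i w c \<in> phi \<Pi> I} \<subseteq> (\<lambda>(i,c). (i, wt \<Pi> i, c)) ` NS \<Pi> I"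
    proof clarify
      fix i w c assume "Unsat i w c \<in> phi \<Pi> I"
      from Unsat_phiE[OF this] show "(i, w, c) \<in> (\<lambda>(i,c). (i, wt \<Pi> i, c)) ` NS \<Pi> I"
        unfolding NS_def by force
    qed
    show "(\<lambda>(i,c). (i, wt \<Pi> i, c)) ` NS \<Pi> I \<subseteq> {(i, w, c). Unsat i w c \<in> phi \<Pi> I}"
      unfolding NS_def using Unsat_phi by fastforce
  qed
  have inj: "inj_on (\<lambda>(i,c). (i, wt \<Pi> i, c)) (NS \<Pi> I)" by (auto simp: inj_on_def)
  have "(\<Sum>(i, w, c)\<in>{(i, w, c). Unsat i w c \<in> phi \<Pi> I}. wval w a) = (\<Sum>(i,c)\<in>NS \<Pi> I. wval (wt \<Pi> i) a)"
    unfolding e by (subst sum.reindex[OF inj]) (simp add: case_prod_unfold comp_def)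
  then show ?thesis by (simp add: W_pnt_def assms NS_def)
qed

lemma SM_sub:
  assumes "I \<in> SM \<Pi>"
  shows "I \<subseteq> (\<Union>(i,c)\<in>gr_idx \<Pi>. head (rl \<Pi> i c))"
proof (rule ccontr)
  let ?H = "\<Union>(i,c)\<in>gr_idx \<Pi>. head (rl \<Pi> i c)"
  assume n: "\<not> I \<subseteq> ?H"
  from assms have st: "stable (PI \<Pi> I) I" by (simp add: SM_PI)
  have "is_model (I \<inter> ?H) (reduct (PI \<Pi> I) I)"
    unfolding model_PI
  proof clarify
    fix i c assume g: "(i,c) \<in> gr_idx \<Pi>" and s: "sat_rule I (rl \<Pi> i c)"
      and ng: "neg (rl \<Pi> i c) \<inter> I = {}" and p: "pos (rl \<Pi> i c) \<subseteq> I \<inter> ?H"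
      and h: "head (rl \<Pi> i c) \<inter> (I \<inter> ?H) = {}"
    have "head (rl \<Pi> i c) \<inter> I \<noteq> {}" using s ng p by (auto simp: sat_rule_def body_sat_def)
    moreover have "head (rl \<Pi> i c) \<subseteq> ?H" using g by blast
    ultimately show False using h by blast
  qed
  moreover have "I \<inter> ?H \<subset> I" using n by blast
  ultimately show False using st unfolding stable_def by blast
qed

lemma SM_fin: "wf_lpmln \<Pi> \<Longrightarrow> finite (SM \<Pi>)"
proof -
  assume wf: "wf_lpmln \<Pi>"
  let ?H = "\<Union>(i,c)\<in>gr_idx \<Pi>. head (rl \<Pi> i c)"
  have "finite ?H" using wf fin_gr[OF wf] unfolding wf_lpmln_def by auto
  moreover have "SM \<Pi> \<subseteq> Pow ?H" using SM_sub by blast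
  ultimately show ?thesis by (meson finite_Pow_iff finite_subset)
qed

definition Tot :: "('a, 'i, 'c) lpmln \<Rightarrow> real \<Rightarrow> real" where
  "Tot \<Pi> a = (\<Sum>(i,c)\<in>gr_idx \<Pi>. wval (wt \<Pi> i) a)"

lemma W_eq:
  assumes wf: "wf_lpmln \<Pi>" and J: "J \<in> SM \<Pi>"
  shows "W \<Pi> a J = exp (Tot \<Pi> a) * exp (-(a * HH \<Pi> J + SS \<Pi> J))"
proof -
  let ?S = "{(i,c)\<in>gr_idx \<Pi>. sat_rule J (rl \<Pi> i c)}"
  let ?f = "\<lambda>(i,c). wval (wt \<Pi> i) a"
  have u: "gr_idx \<Pi> = ?S \<union> NS \<Pi> J" and d: "?S \<inter> NS \<Pi> J = {}" unfolding NS_def by auto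
  have fS: "finite ?S" using fin_gr[OF wf] by (rule rev_finite_subset) auto
  have "Tot \<Pi> a = sum ?f ?S + sum ?f (NS \<Pi> J)"
    unfolding Tot_def by (subst u, rule sum.union_disjoint[OF fS fin_NS[OF wf] d])
  moreover have "sum ?f (NS \<Pi> J) = a * HH \<Pi> J + SS \<Pi> J"
    by (simp add: wval_split sum.distrib sum_distrib_left case_prod_unfold HH_def SS_def)
  ultimately have "sum ?f ?S = Tot \<Pi> a - (a * HH \<Pi> J + SS \<Pi> J)" by simp
  then show ?thesis by (simp add: W_def J mult_exp_exp)
qed


definition mH :: "('a, 'i, 'c) lpmln \<Rightarrow> real" where "mH \<Pi> = Min (HH \<Pi> ` SM \<Pi>)"
definition LL :: "('a, 'i, 'c) lpmln \<Rightarrow> 'a set \<Rightarrow> real" where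
  "LL \<Pi> J = (if HH \<Pi> J = mH \<Pi> then exp (- SS \<Pi> J) else 0)"
definition DD :: "('a, 'i, 'c) lpmln \<Rightarrow> real" where "DD \<Pi> = (\<Sum>J\<in>SM \<Pi>. LL \<Pi> J)"

lemma exp_lim0: "(d::real) > 0 \<Longrightarrow> ((\<lambda>a. exp (-(a*d+s))) \<longlongrightarrow> 0) at_top"
proof -
  assume d: "d > 0"
  have "filterlim (\<lambda>a. s + a*d) at_top at_top"
    by (rule filterlim_tendsto_add_at_top[OF tendsto_const filterlim_at_top_mult_tendsto_pos[OF tendsto_const d filterlim_ident]])
  then have "filterlim (\<lambda>a. -(a*d+s)) at_bot at_top" by (simp add: filterlim_uminus_at_bot add.commute)
  then show ?thesis by (rule filterlim_compose[OF exp_at_bot])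
qed

lemma Prob_eq:
  assumes wf: "wf_lpmln \<Pi>" and I: "I \<in> SM \<Pi>"
  shows "Prob \<Pi> I = LL \<Pi> I / DD \<Pi>" and "DD \<Pi> > 0"
    and "\<And>J. J \<in> SM \<Pi> \<Longrightarrow> mH \<Pi> \<le> HH \<Pi> J" and "\<exists>J0\<in>SM \<Pi>. HH \<Pi> J0 = mH \<Pi>"
proof -
  have fin: "finite (SM \<Pi>)" by (rule SM_fin[OF wf])
  have ne: "SM \<Pi> \<noteq> {}" using I by blast
  show ge: "\<And>J. J \<in> SM \<Pi> \<Longrightarrow> mH \<Pi> \<le> HH \<Pi> J" unfolding mH_def using fin by simp
  show ex: "\<exists>J0\<in>SM \<Pi>. HH \<Pi> J0 = mH \<Pi>" unfolding mH_def
  proof -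
    have "Min (HH \<Pi> ` SM \<Pi>) \<in> HH \<Pi> ` SM \<Pi>" using fin ne by (intro Min_in) auto
    then show "\<exists>J0\<in>SM \<Pi>. HH \<Pi> J0 = Min (HH \<Pi> ` SM \<Pi>)" by (metis imageE)
  qed
  then obtain J0 where J0: "J0 \<in> SM \<Pi>" "HH \<Pi> J0 = mH \<Pi>" by blast
  show Dpos: "DD \<Pi> > 0" unfolding DD_def
    by (rule sum_pos2[OF fin J0(1)]) (auto simp: LL_def J0(2))
  define g where "g J a = exp (-(a * (HH \<Pi> J - mH \<Pi>) + SS \<Pi> J))" for J a
  define C where "C a = exp (Tot \<Pi> a - a * mH \<Pi>)" for a
  have Weq: "W \<Pi> a J = C a * g J a" if "J \<in> SM \<Pi>" for J a
    unfolding W_eq[OF wf that] C_def g_def mult_exp_exp by (simp add: algebra_simps)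
  have ratio: "W \<Pi> a I / (\<Sum>J\<in>SM \<Pi>. W \<Pi> a J) = g I a / (\<Sum>J\<in>SM \<Pi>. g J a)" for a
  proof -
    have "(\<Sum>J\<in>SM \<Pi>. W \<Pi> a J) = C a * (\<Sum>J\<in>SM \<Pi>. g J a)"
      by (simp add: Weq sum_distrib_left)
    moreover have "C a \<noteq> 0" by (simp add: C_def)
    ultimately show ?thesis by (simp add: Weq[OF I])
  qed
  have gl: "(g J \<longlongrightarrow> LL \<Pi> J) at_top" if J: "J \<in> SM \<Pi>" for J
  proof (cases "HH \<Pi> J = mH \<Pi>")
    case True
    then have "g J = (\<lambda>a. exp (- SS \<Pi> J))" by (intro ext) (simp add: g_def)
    then show ?thesis using True by (simp add: LL_def)
  next
    case False
    with ge[OF J] have "HH \<Pi> J - mH \<Pi> > 0" by simp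
    moreover have "g J = (\<lambda>a. exp (-(a * (HH \<Pi> J - mH \<Pi>) + SS \<Pi> J)))" by (intro ext) (simp add: g_def)
    ultimately show ?thesis using exp_lim0[of "HH \<Pi> J - mH \<Pi>" "SS \<Pi> J"] False
      by (simp add: LL_def)
  qed
  have "((\<lambda>a. g I a / (\<Sum>J\<in>SM \<Pi>. g J a)) \<longlongrightarrow> LL \<Pi> I / DD \<Pi>) at_top"
    unfolding DD_def
    by (rule tendsto_divide[OF gl[OF I] tendsto_sum]) (use gl Dpos in \<open>auto simp: DD_def\<close>)
  then have "((\<lambda>a. W \<Pi> a I / (\<Sum>J\<in>SM \<Pi>. W \<Pi> a J)) \<longlongrightarrow> LL \<Pi> I / DD \<Pi>) at_top"
    by (simp add: ratio)
  then show "Prob \<Pi> I = LL \<Pi> I / DD \<Pi>"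
    unfolding Prob_def by (rule tendsto_Lim[OF trivial_limit_at_top_linorder])
qed

lemma mp_iff:
  assumes wf: "wf_lpmln \<Pi>" and I: "I \<in> SM \<Pi>"
  shows "I \<in> most_probable \<Pi> \<longleftrightarrow>
    (\<forall>J\<in>SM \<Pi>. \<not> (HH \<Pi> J < HH \<Pi> I \<or> (HH \<Pi> J = HH \<Pi> I \<and> SS \<Pi> J < SS \<Pi> I)))"
proof -
  note P = Prob_eq[OF wf]
  have "I \<in> most_probable \<Pi> \<longleftrightarrow> (\<forall>J\<in>SM \<Pi>. LL \<Pi> J \<le> LL \<Pi> I)"
    unfolding most_probable_def using I P(1) P(2)[OF I] by (auto simp: divide_le_cancel)
  also have "\<dots> \<longleftrightarrow> (\<forall>J\<in>SM \<Pi>. \<not> (HH \<Pi> J < HH \<Pi> I \<or> (HH \<Pi> J = HH \<Pi> I \<and> SS \<Pi> J < SS \<Pi> I)))"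
  proof
    assume L: "\<forall>J\<in>SM \<Pi>. LL \<Pi> J \<le> LL \<Pi> I"
    obtain J0 where J0: "J0 \<in> SM \<Pi>" "HH \<Pi> J0 = mH \<Pi>" using P(4)[OF I] by blast
    have "LL \<Pi> I > 0" using L J0 by (smt (verit) LL_def exp_gt_zero)
    then have hI: "HH \<Pi> I = mH \<Pi>" by (auto simp: LL_def split: if_splits)
    show "\<forall>J\<in>SM \<Pi>. \<not> (HH \<Pi> J < HH \<Pi> I \<or> (HH \<Pi> J = HH \<Pi> I \<and> SS \<Pi> J < SS \<Pi> I))"
    proof (intro ballI notI)
      fix J assume J: "J \<in> SM \<Pi>" and d: "HH \<Pi> J < HH \<Pi> I \<or> (HH \<Pi> J = HH \<Pi> I \<and> SS \<Pi> J < SS \<Pi> I)"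
      have "mH \<Pi> \<le> HH \<Pi> J" by (rule P(3)[OF I J])
      with d hI have "HH \<Pi> J = mH \<Pi>" "SS \<Pi> J < SS \<Pi> I" by auto
      with L J hI show False by (auto simp: LL_def)
    qed
  next
    assume R: "\<forall>J\<in>SM \<Pi>. \<not> (HH \<Pi> J < HH \<Pi> I \<or> (HH \<Pi> J = HH \<Pi> I \<and> SS \<Pi> J < SS \<Pi> I))"
    obtain J0 where J0: "J0 \<in> SM \<Pi>" "HH \<Pi> J0 = mH \<Pi>" using P(4)[OF I] by blast
    have hI: "HH \<Pi> I = mH \<Pi>" using R J0 P(3)[OF I I] by force
    show "\<forall>J\<in>SM \<Pi>. LL \<Pi> J \<le> LL \<Pi> I"
    proof
      fix J assume J: "J \<in> SM \<Pi>"
      show "LL \<Pi> J \<le> LL \<Pi> I"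
      proof (cases "HH \<Pi> J = mH \<Pi>")
        case True
        then have "SS \<Pi> I \<le> SS \<Pi> J" using R J hI by force
        then show ?thesis using True hI by (simp add: LL_def)
      next
        case False
        then show ?thesis using hI by (simp add: LL_def)
      qed
    qed
  qed
  finally show ?thesis .
qed


definition lev :: "weight \<Rightarrow> nat" where "lev w = (case w of Hard \<Rightarrow> 1 | Soft r \<Rightarrow> 0)"
definition wg :: "weight \<Rightarrow> real" where "wg w = (case w of Hard \<Rightarrow> 1 | Soft r \<Rightarrow> r)"

lemma pen_eq:
  fixes \<Pi> :: "('a, 'i, 'c) lpmln"
  assumes wf: "wf_lpmln \<Pi>"
  shows "penalty (tr_wcs \<Pi>) (phi \<Pi> I) l = (if l = 1 then HH \<Pi> I else if l = 0 then SS \<Pi> I else 0)"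
proof -
  define F :: "'i \<times> 'c \<Rightarrow> (('a, 'i, 'c) tatom, 'i \<times> 'c) wc" where "F = (\<lambda>(i,c). WC {Unsat i (wt \<Pi> i) c} {} (wg (wt \<Pi> i)) (lev (wt \<Pi> i)) (i, c))"
  have tw: "tr_wcs \<Pi> = F ` gr_idx \<Pi>" unfolding tr_wcs_def F_def wg_def lev_def by simp
  have e: "{c \<in> tr_wcs \<Pi>. wlevel c = l \<and> wpos c \<subseteq> phi \<Pi> I \<and> wneg c \<inter> phi \<Pi> I = {}}
      = F ` {x \<in> NS \<Pi> I. lev (wt \<Pi> (fst x)) = l}"
    unfolding tw NS_def F_def using Unsat_phi by fastforce
  have inj: "inj_on F {x \<in> NS \<Pi> I. lev (wt \<Pi> (fst x)) = l}"
    by (auto simp: inj_on_def F_def)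
  have "penalty (tr_wcs \<Pi>) (phi \<Pi> I) l = (\<Sum>x\<in>{x \<in> NS \<Pi> I. lev (wt \<Pi> (fst x)) = l}. wg (wt \<Pi> (fst x)))"
    unfolding penalty_def e by (subst sum.reindex[OF inj]) (simp add: F_def comp_def case_prod_unfold)
  also have "\<dots> = (\<Sum>x\<in>NS \<Pi> I. if lev (wt \<Pi> (fst x)) = l then wg (wt \<Pi> (fst x)) else 0)"
    by (rule sum.inter_filter[OF fin_NS[OF wf]])
  also have "\<dots> = (\<Sum>x\<in>NS \<Pi> I. if l = 1 then hv (wt \<Pi> (fst x)) else if l = 0 then sv (wt \<Pi> (fst x)) else 0)"
  proof (rule sum.cong[OF refl])
    fix x show "(if lev (wt \<Pi> (fst x)) = l then wg (wt \<Pi> (fst x)) else 0) =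
      (if l = 1 then hv (wt \<Pi> (fst x)) else if l = 0 then sv (wt \<Pi> (fst x)) else 0)"
      by (cases "wt \<Pi> (fst x)") (auto simp: lev_def wg_def hv_def)
  qed
  also have "\<dots> = (if l = 1 then HH \<Pi> I else if l = 0 then SS \<Pi> I else 0)"
    by (simp add: HH_def SS_def case_prod_unfold)
  finally show ?thesis .
qed

lemma dom_iff:
  fixes \<Pi> :: "('a, 'i, 'c) lpmln"
  assumes wf: "wf_lpmln \<Pi>"
  shows "dominated (tr_wcs \<Pi>) (phi \<Pi> I) (phi \<Pi> J) \<longleftrightarrow>
    (HH \<Pi> J < HH \<Pi> I \<or> (HH \<Pi> J = HH \<Pi> I \<and> SS \<Pi> J < SS \<Pi> I))"
proof
  assume "dominated (tr_wcs \<Pi>) (phi \<Pi> I) (phi \<Pi> J)"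
  then obtain l where l: "penalty (tr_wcs \<Pi>) (phi \<Pi> J) l < penalty (tr_wcs \<Pi>) (phi \<Pi> I) l"
    "\<forall>k>l. penalty (tr_wcs \<Pi>) (phi \<Pi> J) k = penalty (tr_wcs \<Pi>) (phi \<Pi> I) k"
    unfolding dominated_def by blast
  show "HH \<Pi> J < HH \<Pi> I \<or> (HH \<Pi> J = HH \<Pi> I \<and> SS \<Pi> J < SS \<Pi> I)"
  proof (cases "l = 0")
    case True
    with l have "SS \<Pi> J < SS \<Pi> I" "HH \<Pi> J = HH \<Pi> I"
      using l(2)[rule_format, of 1] by (auto simp: pen_eq[OF wf])
    then show ?thesis by simp
  next
    case False
    with l(1) show ?thesis by (auto simp: pen_eq[OF wf] split: if_splits)
  qed
next
  assume a: "HH \<Pi> J < HH \<Pi> I \<or> (HH \<Pi> J = HH \<Pi> I \<and> SS \<Pi> J < SS \<Pi> I)"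
  show "dominated (tr_wcs \<Pi>) (phi \<Pi> I) (phi \<Pi> J)"
    unfolding dominated_def
  proof (cases "HH \<Pi> J < HH \<Pi> I")
    case True
    show "\<exists>l. penalty (tr_wcs \<Pi>) (phi \<Pi> J) l < penalty (tr_wcs \<Pi>) (phi \<Pi> I) l \<and>
        (\<forall>k>l. penalty (tr_wcs \<Pi>) (phi \<Pi> J) k = penalty (tr_wcs \<Pi>) (phi \<Pi> I) k)"
      by (rule exI[of _ 1]) (use True in \<open>simp add: pen_eq[OF wf]\<close>)
  next
    case False
    with a have "HH \<Pi> J = HH \<Pi> I" "SS \<Pi> J < SS \<Pi> I" by auto
    then show "\<exists>l. penalty (tr_wcs \<Pi>) (phi \<Pi> J) l < penalty (tr_wcs \<Pi>) (phi \<Pi> I) l \<and>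
        (\<forall>k>l. penalty (tr_wcs \<Pi>) (phi \<Pi> J) k = penalty (tr_wcs \<Pi>) (phi \<Pi> I) k)"
      by (intro exI[of _ 0]) (simp add: pen_eq[OF wf])
  qed
qed

lemma opt_iff:
  assumes wf: "wf_lpmln \<Pi>" and I: "I \<in> SM \<Pi>"
  shows "optimal (tr_rules \<Pi>) (tr_wcs \<Pi>) (phi \<Pi> I) \<longleftrightarrow> I \<in> most_probable \<Pi>"
proof -
  have "optimal (tr_rules \<Pi>) (tr_wcs \<Pi>) (phi \<Pi> I) \<longleftrightarrow>
      (\<forall>J\<in>SM \<Pi>. \<not> dominated (tr_wcs \<Pi>) (phi \<Pi> I) (phi \<Pi> J))"
    unfolding optimal_def using phi_stable[OF I] phi_stable stable_phi by metis
  also have "\<dots> \<longleftrightarrow> I \<in> most_probable \<Pi>"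
    unfolding mp_iff[OF wf I] dom_iff[OF wf] ..
  finally show ?thesis .
qed

theorem theorem3:
  fixes \<Pi> :: "('a, 'i, 'c) lpmln"
  assumes "wf_lpmln \<Pi>"
  shows "bij_betw (phi \<Pi>) (SM \<Pi>) {J. stable (tr_rules \<Pi>) J} \<and>
         (\<forall>I\<in>SM \<Pi>. \<forall>a. W_pnt \<Pi> a I =
           exp (- (\<Sum>(i, w, c)\<in>{(i, w, c). Unsat i w c \<in> phi \<Pi> I}. wval w a))) \<and>
         bij_betw (phi \<Pi>) (most_probable \<Pi>) {J. optimal (tr_rules \<Pi>) (tr_wcs \<Pi>) J}"
proof (intro conjI)
  show b: "bij_betw (phi \<Pi>) (SM \<Pi>) {J. stable (tr_rules \<Pi>) J}" by (rule phi_bij)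
  show "\<forall>I\<in>SM \<Pi>. \<forall>a. W_pnt \<Pi> a I =
           exp (- (\<Sum>(i, w, c)\<in>{(i, w, c). Unsat i w c \<in> phi \<Pi> I}. wval w a))"
    using part2 by blast
  have sub: "most_probable \<Pi> \<subseteq> SM \<Pi>" unfolding most_probable_def by blast
  have img: "phi \<Pi> ` most_probable \<Pi> = {J. optimal (tr_rules \<Pi>) (tr_wcs \<Pi>) J}"
  proof
    show "phi \<Pi> ` most_probable \<Pi> \<subseteq> {J. optimal (tr_rules \<Pi>) (tr_wcs \<Pi>) J}"
      using opt_iff[OF assms] sub by blast
    show "{J. optimal (tr_rules \<Pi>) (tr_wcs \<Pi>) J} \<subseteq> phi \<Pi> ` most_probable \<Pi>"
    proof
      fix J assume "J \<in> {J. optimal (tr_rules \<Pi>) (tr_wcs \<Pi>) J}"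
      then have o: "optimal (tr_rules \<Pi>) (tr_wcs \<Pi>) J" by simp
      then have st: "stable (tr_rules \<Pi>) J" unfolding optimal_def by blast
      define I where "I = {a. Atom a \<in> J}"
      have J: "J = phi \<Pi> I" and I: "I \<in> SM \<Pi>" using stable_phi[OF st] by (simp_all add: I_def)
      have "I \<in> most_probable \<Pi>" using o opt_iff[OF assms I] J by simp
      then show "J \<in> phi \<Pi> ` most_probable \<Pi>" using J by blast
    qed
  qed
  show "bij_betw (phi \<Pi>) (most_probable \<Pi>) {J. optimal (tr_rules \<Pi>) (tr_wcs \<Pi>) J}"
    using bij_betw_subset[OF b sub img] .
qed

end
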